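(* Let $R=GR(4,m)$ with $m$ odd, and let $\mathcal{T}$ be its Teichmüller set. Then (1) the multiset $\mathcal{T}+\mathcal{T}+\mathcal{T}=\{X+Y+Z:X,Y,Z\in\mathcal{T}\}$ contains each element of $-\mathcal{T}$ with multiplicity one, and each element of $R$ outside $-\mathcal{T}$ with multiplicity $2^m+1$; (2) the multiset $\mathcal{T}+\mathcal{T}-\mathcal{T}=\{X+Y-Z:X,Y,Z\in\mathcal{T}\}$ contains each element of $\mathcal{T}$ with multiplicity $2^{m+1}-1$, and each element of $R$ outside $\mathcal{T}$ with multiplicity $2^m-1$.
   Context: $R=GR(4,m)=\mathbb{Z}_4[x]/(f(x))$ with $f$ monic of degree $m$ irreducible mod 2 (the Galois ring of order $4^m$). $\mathcal{T}=\{0,1,\beta,\dots,\beta^{2^m-2}\}$ where $\beta\in R^*$ has multiplicative order $2^m-1$ (Teichmüller set), and $-\mathcal{T}=\{-X:X\in\mathcal{T}\}$. Multisets count ordered tuples. *)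

theory Defs
  imports "HOL-Library.Numeral_Type" "HOL-Library.Multiset"
          "HOL-Computational_Algebra.Polynomial" "HOL-Computational_Algebra.Factorial_Ring"
begin

text \<open>Z_4 is the numeral type 4 (arithmetic mod 4), Z_2 the numeral type 2.
  GR(4,m) = Z_4[x]/(f) is modelled by its canonical representatives: polynomials
  over Z_4 of degree < m = degree f. Addition of representatives is ordinary
  polynomial addition; two polynomials represent the same element of R iff f divides
  their difference.\<close>

definition red2 :: "4 poly \<Rightarrow> 2 poly" where
  "red2 f = map_poly (\<lambda>c. of_int (Rep_bit0 c)) f"

definition GR_modulus :: "4 poly \<Rightarrow> nat \<Rightarrow> bool" where
  "GR_modulus f m \<longleftrightarrow> lead_coeff f = 1 \<and> degree f = m \<and> irreducible (red2 f)"

definition GR_carrier :: "4 poly \<Rightarrow> 4 poly set" where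
  "GR_carrier f = {p. degree p < degree f}"

definition GR_mult_order :: "4 poly \<Rightarrow> 4 poly \<Rightarrow> nat \<Rightarrow> bool" where
  "GR_mult_order f \<beta> n \<longleftrightarrow> 0 < n \<and> f dvd (\<beta> ^ n - 1) \<and>
      (\<forall>k. 0 < k \<and> k < n \<longrightarrow> \<not> f dvd (\<beta> ^ k - 1))"

definition teich :: "4 poly \<Rightarrow> 4 poly \<Rightarrow> 4 poly set" where
  "teich f \<beta> = {t \<in> GR_carrier f. t = 0 \<or> (\<exists>i < 2 ^ degree f - 1. f dvd (t - \<beta> ^ i))}"

end

theory Submission
  imports Defs
begin

lemma ex4: "(c::4) = 0 \<or> c = 1 \<or> c = 2 \<or> c = 3"
proof (cases c)
  case (of_int z)
  have "CARD(4) = 4" by simp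
  then have "z < 4" "0 \<le> z" using of_int by simp_all
  then have "z = 0 \<or> z = 1 \<or> z = 2 \<or> z = 3" by arith
  then show ?thesis
  proof (elim disjE)
    assume "z = 0" then show ?thesis using of_int by simp
  next
    assume "z = 1" then show ?thesis using of_int by simp
  next
    assume "z = 2" then have "c = 2" using of_int by (simp only: of_int_numeral)
    then show ?thesis by simp
  next
    assume "z = 3" then have "c = 3" using of_int by (simp only: of_int_numeral)
    then show ?thesis by simp
  qed
qed

lemma coeff2: "coeff (2 * p) i = 2 * coeff (p::4 poly) i"
  by (simp only: mult_2 coeff_add)

lemma four: "(4::4 poly) = 0"
proof -
  have "(4::4 poly) = [:4:]" by (simp only: numeral_poly)
  also have "(4::4) = 0" by simp
  finally show ?thesis by (simp only: pCons_0_0)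
qed
lemma tt: "(2::'a::comm_semiring_1)*2 = 4" by simp
lemma two_two: "2 * (2 * (x::4 poly)) = 0"
  by (simp only: mult.assoc[symmetric] tt four mult_zero_left)

definition g1 :: "4 \<Rightarrow> 4" where "g1 c = (if c = 1 \<or> c = 3 then 1 else 0)"
definition g2 :: "4 \<Rightarrow> 4" where "g2 c = (if c = 2 \<or> c = 3 then 1 else 0)"

lemma one_two: "(1::'a::comm_semiring_1) + 2 = 3"
  by simp

lemma g12: "c = g1 c + 2 * g2 c"
  using ex4[of c] one_two[where 'a=4] unfolding g1_def g2_def by (elim disjE) simp_all

lemma g1_01: "g1 c = 0 \<or> g1 c = 1" unfolding g1_def by simp

lemma two_zero_coeff: "2 * (c::4) = 0 \<Longrightarrow> c = 2 * g2 c"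
  using ex4[of c] unfolding g2_def by (elim disjE) simp_all

lemma g1_0[simp]: "g1 0 = 0" and g2_0[simp]: "g2 0 = 0" by (simp_all add: g1_def g2_def)

lemma poly_g12: "(r::4 poly) = map_poly g1 r + 2 * map_poly g2 r"
proof (rule poly_eqI)
  fix i
  have "coeff (map_poly g1 r + 2 * map_poly g2 r) i = g1 (coeff r i) + 2 * g2 (coeff r i)"
    by (simp add: coeff2 coeff_map_poly)
  then show "coeff r i = coeff (map_poly g1 r + 2 * map_poly g2 r) i"
    using g12 by metis
qed

lemma poly_two_zero: "2 * (r::4 poly) = 0 \<Longrightarrow> r = 2 * map_poly g2 r"
proof (rule poly_eqI)
  fix i assume "2 * r = 0"
  then have "2 * coeff r i = 0" by (metis coeff2 coeff_0)
  then show "coeff r i = coeff (2 * map_poly g2 r) i"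
    using two_zero_coeff[of "coeff r i"] by (simp add: coeff2 coeff_map_poly)
qed


lemma id_sq: "((b::'a::comm_ring_1) + 2*c + f*k)^2 - b^2 = f*(k*(2*b + 2*c + f*k) + 2*c*k) + 2*(2*(c*b+c*c))"
  by (simp add: power2_eq_square algebra_simps)

lemma id_2: "2*((b::'a::comm_ring_1) + 2*c + f*k) - 2*b = 2*(2*c) + f*(2*k)"
  by (simp add: algebra_simps)

locale gr =
  fixes f \<beta> :: "4 poly" and m :: nat
  assumes oddm: "odd m" and lcf: "lead_coeff f = 1" and degf: "degree f = m"
    and ordb: "GR_mult_order f \<beta> (2 ^ m - 1)"
begin

definition n :: nat where "n = 2 ^ m - 1"
definition q :: nat where "q = 2 ^ m"
definition E :: "4 poly \<Rightarrow> 4 poly \<Rightarrow> bool" where "E a b \<longleftrightarrow> f dvd (a - b)"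
definition I :: "4 poly \<Rightarrow> bool" where "I d \<longleftrightarrow> (\<exists>c k. d = 2 * c + f * k)"
definition E2 :: "4 poly \<Rightarrow> 4 poly \<Rightarrow> bool" where "E2 a b \<longleftrightarrow> I (a - b)"

lemma m_pos: "0 < m" using oddm by (cases m) auto
lemma q_ge2: "2 \<le> q" unfolding q_def using m_pos
  by (metis One_nat_def Suc_leI power_increasing_iff power_one_right one_less_numeral_iff semiring_norm(76))
lemma q_eq: "q = n + 1" unfolding q_def n_def by simp
lemma n_pos: "0 < n" using q_ge2 q_eq by simp
lemma n_odd: "odd n" unfolding n_def using m_pos by (simp add: odd_pos)

lemma canon_zero: assumes "f dvd g" "degree g < m" shows "g = 0"
proof (rule ccontr)
  assume "g \<noteq> 0"
  from assms(1) obtain h where g: "g = f * h" by (auto elim: dvdE)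
  with \<open>g \<noteq> 0\<close> have "h \<noteq> 0" by auto
  have "coeff g (degree f + degree h) = lead_coeff h"
    using g coeff_mult_degree_sum[of f h] lcf by simp
  then have "coeff g (m + degree h) \<noteq> 0" using \<open>h \<noteq> 0\<close> degf by simp
  then have "m + degree h \<le> degree g" by (rule le_degree)
  with assms(2) show False by simp
qed

lemma canon_eq: assumes "degree a < m" "degree b < m" "E a b" shows "a = b"
proof -
  have "degree (a - b) < m" using degree_diff_le_max[of a b] assms(1,2) by simp
  then have "a - b = 0" using canon_zero assms(3) unfolding E_def by blast
  then show ?thesis by simp
qed

lemma E_refl[simp]: "E a a" unfolding E_def by simp
lemma E_sym: "E a b \<Longrightarrow> E b a" unfolding E_def
proof -
  assume "f dvd a - b"
  then have "f dvd - (a - b)" by (simp only: dvd_minus_iff)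
  then show "f dvd b - a" by simp
qed
lemma E_trans: "E a b \<Longrightarrow> E b c \<Longrightarrow> E a c" unfolding E_def
proof -
  assume "f dvd a - b" "f dvd b - c"
  then have "f dvd (a - b) + (b - c)" by (rule dvd_add)
  then show "f dvd a - c" by simp
qed
lemma E_add: "E a b \<Longrightarrow> E c d \<Longrightarrow> E (a + c) (b + d)" unfolding E_def
proof -
  assume "f dvd a - b" "f dvd c - d"
  then have "f dvd (a - b) + (c - d)" by (rule dvd_add)
  then show "f dvd a + c - (b + d)" by (simp add: algebra_simps)
qed
lemma E_diff: "E a b \<Longrightarrow> E c d \<Longrightarrow> E (a - c) (b - d)" unfolding E_def
proof -
  assume "f dvd a - b" "f dvd c - d"
  then have "f dvd (a - b) - (c - d)" by (rule dvd_diff)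
  then show "f dvd a - c - (b - d)" by (simp add: algebra_simps)
qed
lemma E_minus: "E a b \<Longrightarrow> E (- a) (- b)" unfolding E_def
proof -
  assume "f dvd a - b"
  then have "f dvd - (a - b)" by (simp only: dvd_minus_iff)
  moreover have "- (a - b) = - a - - b" by (simp add: algebra_simps)
  ultimately show "f dvd - a - - b" by simp
qed
lemma E_mult: "E a b \<Longrightarrow> E c d \<Longrightarrow> E (a * c) (b * d)"
proof -
  assume "E a b" "E c d"
  then have "f dvd (a - b) * c" "f dvd b * (c - d)" unfolding E_def by auto
  then have "f dvd (a - b) * c + b * (c - d)" by (rule dvd_add)
  moreover have "(a - b) * c + b * (c - d) = a * c - b * d" by (simp add: algebra_simps)
  ultimately show ?thesis unfolding E_def by simp
qed
lemma E_pow: "E a b \<Longrightarrow> E (a ^ k) (b ^ k)"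
  by (induction k) (simp_all add: E_mult)

lemma I_add: "I a \<Longrightarrow> I b \<Longrightarrow> I (a + b)" unfolding I_def
proof (elim exE)
  fix c k c' k' assume "a = 2 * c + f * k" "b = 2 * c' + f * k'"
  then have "a + b = 2 * (c + c') + f * (k + k')" by (simp add: algebra_simps)
  then show "\<exists>c k. a + b = 2 * c + f * k" by blast
qed
lemma I_mult: "I a \<Longrightarrow> I (a * b)" unfolding I_def
proof (elim exE)
  fix c k assume "a = 2 * c + f * k"
  then have "a * b = 2 * (c * b) + f * (k * b)" by (simp add: algebra_simps)
  then show "\<exists>c k. a * b = 2 * c + f * k" by blast
qed
lemma I_2: "I (2 * a)" unfolding I_def by (rule exI[of _ a], rule exI[of _ 0]) simp
lemma I_minus: "I a \<Longrightarrow> I (- a)" using I_mult[of a "-1"] by (simp only: mult_minus1_right)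
lemma I_0: "I 0" using I_2[of 0] by simp
lemma I_E: "E a b \<Longrightarrow> I (a - b)" unfolding E_def I_def
proof -
  assume "f dvd a - b"
  then obtain k where "a - b = f * k" by (elim dvdE)
  then have "a - b = 2 * 0 + f * k" by simp
  then show "\<exists>c k. a - b = 2 * c + f * k" by blast
qed

lemma E2_refl[simp]: "E2 a a" unfolding E2_def by (simp add: I_0)
lemma E2_sym: "E2 a b \<Longrightarrow> E2 b a" unfolding E2_def
proof -
  assume "I (a - b)"
  then have "I (- (a - b))" by (rule I_minus)
  then show "I (b - a)" by simp
qed
lemma E2_trans: "E2 a b \<Longrightarrow> E2 b c \<Longrightarrow> E2 a c" unfolding E2_def
proof -
  assume "I (a - b)" "I (b - c)"
  then have "I ((a - b) + (b - c))" by (rule I_add)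
  then show "I (a - c)" by simp
qed
lemma E2_add: "E2 a b \<Longrightarrow> E2 c d \<Longrightarrow> E2 (a + c) (b + d)" unfolding E2_def
proof -
  assume "I (a - b)" "I (c - d)"
  then have "I ((a - b) + (c - d))" by (rule I_add)
  moreover have "(a - b) + (c - d) = a + c - (b + d)" by (simp add: algebra_simps)
  ultimately show "I (a + c - (b + d))" by metis
qed
lemma E2_diff: "E2 a b \<Longrightarrow> E2 c d \<Longrightarrow> E2 (a - c) (b - d)" unfolding E2_def
proof -
  assume "I (a - b)" "I (c - d)"
  then have "I ((a - b) + - (c - d))" by (intro I_add I_minus)
  moreover have "(a - b) + - (c - d) = a - c - (b - d)" by (simp add: algebra_simps)
  ultimately show "I (a - c - (b - d))" by metis
qed
lemma E2_mult: "E2 a b \<Longrightarrow> E2 c d \<Longrightarrow> E2 (a * c) (b * d)"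
proof -
  assume "E2 a b" "E2 c d"
  then have "I ((a - b) * c)" "I ((c - d) * b)" unfolding E2_def by (auto intro: I_mult)
  then have "I ((a - b) * c + (c - d) * b)" by (rule I_add)
  moreover have "(a - b) * c + (c - d) * b = a * c - b * d" by (simp add: algebra_simps)
  ultimately show ?thesis unfolding E2_def by simp
qed
lemma E2_pow: "E2 a b \<Longrightarrow> E2 (a ^ k) (b ^ k)"
  by (induction k) (simp_all add: E2_mult)
lemma E_E2: "E a b \<Longrightarrow> E2 a b" unfolding E2_def by (rule I_E)
lemma E2_neg: "E2 (- a) a" unfolding E2_def
proof -
  have "- a - a = 2 * (- a)" by (simp add: algebra_simps)
  then show "I (- a - a)" using I_2 by metis
qed
lemma E2_two: "E2 (2 * a) 0" unfolding E2_def using I_2 by simp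

lemma E2_exp: "E2 a b \<Longrightarrow> \<exists>c k. a = b + 2 * c + f * k"
  unfolding E2_def I_def by (metis add.assoc diff_add_cancel add.commute)

lemma E2_sq_E: assumes "E2 a b" shows "E (a ^ 2) (b ^ 2)"
proof -
  obtain c k where a: "a = b + 2 * c + f * k" using E2_exp[OF assms] by blast
  have "a ^ 2 - b ^ 2 = f * (k * (2 * b + 2 * c + f * k) + 2 * c * k) + 2 * (2 * (c * b + c * c))"
    unfolding a by (rule id_sq)
  then have "a ^ 2 - b ^ 2 = f * (k * (2 * b + 2 * c + f * k) + 2 * c * k)"
    by (simp only: two_two add_0_right)
  then show ?thesis unfolding E_def by simp
qed

lemma E2_double: assumes "E2 a b" shows "E (2 * a) (2 * b)"
proof -
  obtain c k where a: "a = b + 2 * c + f * k" using E2_exp[OF assms] by blast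
  have "2 * a - 2 * b = 2 * (2 * c) + f * (2 * k)" unfolding a by (rule id_2)
  then have "2 * a - 2 * b = f * (2 * k)" by (simp only: two_two add_0_left)
  then show ?thesis unfolding E_def by simp
qed

lemma not_E_1_0: "\<not> E 1 0"
proof
  assume "E 1 0"
  then have "f dvd 1" unfolding E_def by simp
  then have "(1::4 poly) = 0" using canon_zero[of 1] m_pos by simp
  then show False by simp
qed

lemma not_E2_1_0: "\<not> E2 1 0"
  using E2_sq_E[of 1 0] not_E_1_0 by (auto simp: power2_eq_square)

end

context gr begin

lemma bn: "E (\<beta> ^ n) 1" using ordb unfolding GR_mult_order_def E_def n_def by simp
lemma bmin: "0 < k \<Longrightarrow> k < n \<Longrightarrow> \<not> E (\<beta> ^ k) 1"
  using ordb unfolding GR_mult_order_def E_def n_def by simp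

lemma b_nmult: "E (\<beta> ^ (n * j)) 1"
  using E_pow[OF bn, of j] by (simp add: power_mult)

lemma b_mod: "E (\<beta> ^ k) (\<beta> ^ (k mod n))"
proof -
  have "\<beta> ^ k = \<beta> ^ (n * (k div n)) * \<beta> ^ (k mod n)"
    by (simp add: power_add[symmetric])
  moreover have "E (\<beta> ^ (n * (k div n)) * \<beta> ^ (k mod n)) (1 * \<beta> ^ (k mod n))"
    by (rule E_mult[OF b_nmult E_refl])
  ultimately show ?thesis by simp
qed

lemma E_b_one: "E (\<beta> ^ k) 1 \<longleftrightarrow> n dvd k"
proof
  assume h: "E (\<beta> ^ k) 1"
  show "n dvd k"
  proof (rule ccontr)
    assume "\<not> n dvd k"
    then have "0 < k mod n" "k mod n < n" using n_pos by (auto simp: dvd_eq_mod_eq_0)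
    moreover have "E (\<beta> ^ (k mod n)) 1" using E_trans[OF E_sym[OF b_mod] h] .
    ultimately show False using bmin by blast
  qed
next
  assume "n dvd k"
  then obtain j where "k = n * j" by (elim dvdE)
  then show "E (\<beta> ^ k) 1" using b_nmult by simp
qed

lemma odd_dvd2: "odd (n::nat) \<Longrightarrow> n dvd 2 * k \<Longrightarrow> n dvd k"
  by (metis coprime_dvd_mult_right_iff coprime_commute odd_iff_mod_2_eq_one coprime_mod_right_iff
       coprime_1_right zero_neq_one dvd_mult_cancel1 coprime_left_2_iff_odd)

lemma E2_b_one: assumes "E2 (\<beta> ^ k) 1" shows "n dvd k"
proof -
  have "E ((\<beta> ^ k) ^ 2) (1 ^ 2)" by (rule E2_sq_E[OF assms])
  then have "E (\<beta> ^ (2 * k)) 1" by (simp add: power_mult[symmetric] mult.commute)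
  then have "n dvd 2 * k" using E_b_one by blast
  then show ?thesis using odd_dvd2 n_odd by blast
qed

lemma b_cancel: "\<beta> ^ i * \<beta> ^ ((n - 1) * i) = \<beta> ^ (n * i)"
proof -
  have "i + (n - 1) * i = n * i" using n_pos by (cases n) auto
  then show ?thesis by (simp add: power_add[symmetric])
qed

lemma E2_b_core: assumes "E2 (\<beta> ^ i) (\<beta> ^ j)" shows "n dvd j + (n - 1) * i"
proof -
  have "E2 (\<beta> ^ i * \<beta> ^ ((n - 1) * i)) (\<beta> ^ j * \<beta> ^ ((n - 1) * i))"
    by (rule E2_mult[OF assms E2_refl])
  then have "E2 (\<beta> ^ (n * i)) (\<beta> ^ (j + (n - 1) * i))"
    by (simp only: b_cancel power_add)
  moreover have "E2 (\<beta> ^ (n * i)) 1" by (rule E_E2[OF b_nmult])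
  ultimately have "E2 (\<beta> ^ (j + (n - 1) * i)) 1" using E2_sym E2_trans by blast
  then show ?thesis by (rule E2_b_one)
qed

lemma E2_b_E: assumes "E2 (\<beta> ^ i) (\<beta> ^ j)" shows "E (\<beta> ^ i) (\<beta> ^ j)"
proof -
  have "E (\<beta> ^ (j + (n - 1) * i)) 1" using E2_b_core[OF assms] E_b_one by blast
  then have h1: "E (\<beta> ^ (j + (n - 1) * i) * \<beta> ^ i) (1 * \<beta> ^ i)" by (rule E_mult[OF _ E_refl])
  have eq:  "\<beta> ^ (j + (n - 1) * i) * \<beta> ^ i = \<beta> ^ j * \<beta> ^ (n * i)"
  proof -
    have "\<beta> ^ (j + (n - 1) * i) * \<beta> ^ i = \<beta> ^ j * (\<beta> ^ i * \<beta> ^ ((n - 1) * i))"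
      by (simp only: power_add mult_ac)
    then show ?thesis by (simp only: b_cancel)
  qed
  have h2: "E (\<beta> ^ j * \<beta> ^ (n * i)) (\<beta> ^ j * 1)" by (rule E_mult[OF E_refl b_nmult])
  have h3: "E (\<beta> ^ j * \<beta> ^ (n * i)) (\<beta> ^ i)" using h1 unfolding eq by simp
  have h4: "E (\<beta> ^ j * \<beta> ^ (n * i)) (\<beta> ^ j)" using h2 by simp
  show ?thesis by (rule E_trans[OF E_sym[OF h3] h4])
qed

lemma E_b_mod: assumes "E (\<beta> ^ i) (\<beta> ^ j)" shows "i mod n = j mod n"
proof -
  have d: "n dvd j + (n - 1) * i" using E2_b_core[OF E_E2[OF assms]] .
  have d0: "(j + (n - 1) * i) mod n = 0" using d by simp
  have "(j + (n - 1) * i + i) mod n = ((j + (n - 1) * i) mod n + i) mod n"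
    by (simp only: mod_add_left_eq)
  then have "(j + (n - 1) * i + i) mod n = i mod n" by (simp only: d0 add_0)
  moreover have "j + (n - 1) * i + i = j + n * i" using n_pos by (cases n) auto
  moreover have "(j + n * i) mod n = j mod n" by simp
  ultimately show ?thesis by metis
qed

lemma E2_b_zero: "\<not> E2 (\<beta> ^ k) 0"
proof
  assume "E2 (\<beta> ^ k) 0"
  then have "E2 (\<beta> ^ k * \<beta> ^ ((n - 1) * k)) (0 * \<beta> ^ ((n - 1) * k))"
    by (rule E2_mult[OF _ E2_refl])
  then have "E2 (\<beta> ^ (n * k)) 0" by (simp only: b_cancel mult_zero_left)
  moreover have "E2 (\<beta> ^ (n * k)) 1" by (rule E_E2[OF b_nmult])
  ultimately have "E2 1 0" using E2_sym E2_trans by blast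
  then show False using not_E2_1_0 by simp
qed

end

context gr begin

abbreviation T where "T \<equiv> teich f \<beta>"

lemma T_def': "t \<in> T \<longleftrightarrow> degree t < m \<and> (t = 0 \<or> (\<exists>i<n. E t (\<beta> ^ i)))"
  unfolding teich_def GR_carrier_def E_def n_def degf by simp

lemma T_iff: "t \<in> T \<longleftrightarrow> degree t < m \<and> (t = 0 \<or> (\<exists>i. E t (\<beta> ^ i)))"
proof
  assume "t \<in> T" then show "degree t < m \<and> (t = 0 \<or> (\<exists>i. E t (\<beta> ^ i)))"
    unfolding T_def' by blast
next
  assume h: "degree t < m \<and> (t = 0 \<or> (\<exists>i. E t (\<beta> ^ i)))"
  show "t \<in> T"
  proof (cases "t = 0")
    case True then show ?thesis using h T_def' by blast
  next
    case False
    then obtain i where "E t (\<beta> ^ i)" using h by blast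
    then have "E t (\<beta> ^ (i mod n))" using E_trans b_mod by blast
    moreover have "i mod n < n" using n_pos by simp
    ultimately show ?thesis using h T_def' by blast
  qed
qed

lemma T_deg: "t \<in> T \<Longrightarrow> degree t < m" using T_iff by blast
lemma T_0[simp]: "0 \<in> T" using T_iff m_pos by simp
lemma T_1[simp]: "1 \<in> T" using T_iff[of 1] m_pos by (metis E_refl degree_1 power_0)
lemma T_cases: "t \<in> T \<Longrightarrow> t \<noteq> 0 \<Longrightarrow> \<exists>i. E t (\<beta> ^ i)" using T_iff by blast

lemma T_eq: "t \<in> T \<Longrightarrow> s \<in> T \<Longrightarrow> E t s \<Longrightarrow> t = s"
  using canon_eq T_deg by blast

lemma T_inj2: assumes "t \<in> T" "s \<in> T" "E2 t s" shows "t = s"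
proof (cases "t = 0")
  case True
  show ?thesis
  proof (rule ccontr)
    assume "t \<noteq> s"
    then have "s \<noteq> 0" using True by simp
    then obtain j where j: "E s (\<beta> ^ j)" using T_cases assms(2) by blast
    have "E2 (\<beta> ^ j) 0" using E2_sym[OF assms(3)] E2_sym[OF E_E2[OF j]] True E2_trans by blast
    then show False using E2_b_zero by blast
  qed
next
  case False
  then obtain i where i: "E t (\<beta> ^ i)" using T_cases assms(1) by blast
  show ?thesis
  proof (cases "s = 0")
    case True
    have "E2 (\<beta> ^ i) 0" using assms(3) E2_sym[OF E_E2[OF i]] True E2_trans by blast
    then show ?thesis using E2_b_zero by blast
  next
    case False
    then obtain j where j: "E s (\<beta> ^ j)" using T_cases assms(2) by blast
    have "E2 (\<beta> ^ i) (\<beta> ^ j)"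
      using E2_trans[OF E2_trans[OF E2_sym[OF E_E2[OF i]] assms(3)] E_E2[OF j]] .
    then have "E (\<beta> ^ i) (\<beta> ^ j)" by (rule E2_b_E)
    then have "E t s" using E_trans[OF E_trans[OF i] E_sym[OF j]] by blast
    then show ?thesis using T_eq assms by blast
  qed
qed

definition red :: "4 poly \<Rightarrow> 4 poly" where "red a = (SOME r. degree r < m \<and> E a r)"

lemma div_exists: "\<exists>r. degree r < m \<and> E a r"
proof (induction "degree a" arbitrary: a rule: less_induct)
  case less
  show ?case
  proof (cases "degree a < m")
    case True then show ?thesis by (intro exI[of _ a]) simp
  next
    case False
    define d where "d = degree a - m"
    define c where "c = lead_coeff a"
    define a' where "a' = a - monom c d * f"
    have dm: "degree a = d + m" using False d_def by simp
    have dp: "degree (monom c d * f) \<le> d + m"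
      using degree_mult_le[of "monom c d" f] degree_monom_le[of c d] degf by simp
    have "degree a' \<le> degree a - 1"
    proof (rule degree_le, intro allI impI)
      fix i assume i: "degree a - 1 < i"
      show "coeff a' i = 0"
      proof (cases "i = degree a")
        case True
        have "coeff (monom c d * f) (d + m) = c * coeff f m" by (simp add: coeff_monom_mult)
        then have "coeff (monom c d * f) (degree a) = c" using lcf degf dm by simp
        then show ?thesis unfolding a'_def c_def using True by simp
      next
        case False
        then have "degree a < i" using i by simp
        then have "coeff a i = 0" "coeff (monom c d * f) i = 0"
          using dp dm by (auto intro!: coeff_eq_0)
        then show ?thesis unfolding a'_def by simp
      qed
    qed
    moreover have "0 < degree a" using dm m_pos by simp
    ultimately have "degree a' < degree a" by simp
    then obtain r where r: "degree r < m" "E a' r" using less by blast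
    have "E a a'" unfolding E_def a'_def by simp
    then show ?thesis using r E_trans by blast
  qed
qed

lemma red: "degree (red a) < m" "E a (red a)"
  using someI_ex[OF div_exists[of a]] unfolding red_def by blast+

lemma red_T: "red (\<beta> ^ i) \<in> T"
  using red[of "\<beta> ^ i"] T_iff E_sym by blast

lemma red_nz: "red (\<beta> ^ i) \<noteq> 0"
  using red(2)[of "\<beta> ^ i"] E2_b_zero E_E2 by fastforce

lemma T_eq_img: "T = insert 0 ((\<lambda>i. red (\<beta> ^ i)) ` {..<n})"
proof
  show "T \<subseteq> insert 0 ((\<lambda>i. red (\<beta> ^ i)) ` {..<n})"
  proof
    fix t assume t: "t \<in> T"
    show "t \<in> insert 0 ((\<lambda>i. red (\<beta> ^ i)) ` {..<n})"
    proof (cases "t = 0")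
      case False
      then obtain i where i: "i < n" "E t (\<beta> ^ i)" using t T_def' by blast
      then have "t = red (\<beta> ^ i)" using T_eq[OF t red_T] E_trans red(2) by blast
      then show ?thesis using i by blast
    qed simp
  qed
next
  show "insert 0 ((\<lambda>i. red (\<beta> ^ i)) ` {..<n}) \<subseteq> T" using red_T by auto
qed

lemma T_card: "card T = q" and T_fin: "finite T"
proof -
  have inj: "inj_on (\<lambda>i. red (\<beta> ^ i)) {..<n}"
  proof (rule inj_onI)
    fix i j assume ij: "i \<in> {..<n}" "j \<in> {..<n}" "red (\<beta> ^ i) = red (\<beta> ^ j)"
    then have "E (\<beta> ^ i) (\<beta> ^ j)" using red(2) E_trans E_sym by metis
    then have "i mod n = j mod n" by (rule E_b_mod)
    then show "i = j" using ij by simp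
  qed
  have "0 \<notin> (\<lambda>i. red (\<beta> ^ i)) ` {..<n}" using red_nz by auto
  then show "card T = q" unfolding T_eq_img using inj q_eq by (simp add: card_image)
  show "finite T" unfolding T_eq_img by simp
qed

end

context gr begin

definition P01 :: "4 poly set" where
  "P01 = {p. degree p < m \<and> (\<forall>i. coeff p i = 0 \<or> coeff p i = 1)}"

lemma P01_fin_card: "finite P01 \<and> card P01 \<le> q"
proof -
  define \<phi> where "\<phi> p = {i. coeff p i = 1}" for p :: "4 poly"
  have inj: "inj_on \<phi> P01"
  proof (rule inj_onI)
    fix p p' assume pp: "p \<in> P01" "p' \<in> P01" "\<phi> p = \<phi> p'"
    show "p = p'"
    proof (rule poly_eqI)
      fix i
      have "coeff p i = 1 \<longleftrightarrow> coeff p' i = 1" using pp(3) unfolding \<phi>_def by blast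
      moreover have "coeff p i = 0 \<or> coeff p i = 1" "coeff p' i = 0 \<or> coeff p' i = 1"
        using pp(1,2) unfolding P01_def by auto
      ultimately show "coeff p i = coeff p' i" by auto
    qed
  qed
  have sub: "\<phi> ` P01 \<subseteq> Pow {..<m}"
  proof
    fix S assume "S \<in> \<phi> ` P01"
    then obtain p where p: "p \<in> P01" "S = \<phi> p" by blast
    have "i < m" if "coeff p i = 1" for i
    proof -
      have "i \<le> degree p" using that by (intro le_degree) simp
      then show ?thesis using p(1) unfolding P01_def by simp
    qed
    then show "S \<in> Pow {..<m}" using p unfolding \<phi>_def by auto
  qed
  have fin: "finite P01" using inj sub by (meson finite_Pow_iff finite_lessThan inj_on_finite)
  have "card P01 \<le> card (Pow {..<m::nat})" using card_inj_on_le[OF inj sub] by simp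
  then show ?thesis using fin unfolding q_def by (simp add: card_Pow)
qed

definition p01 :: "4 poly \<Rightarrow> 4 poly" where "p01 a = map_poly g1 (red a)"

lemma p01_P01: "p01 a \<in> P01"
proof -
  have "degree (p01 a) \<le> degree (red a)" unfolding p01_def
    by (rule degree_le) (simp add: coeff_map_poly coeff_eq_0)
  then have "degree (p01 a) < m" using red(1)[of a] by simp
  moreover have "coeff (p01 a) i = 0 \<or> coeff (p01 a) i = 1" for i
    unfolding p01_def coeff_map_poly[of g1, OF g1_0] by (rule g1_01)
  ultimately show ?thesis unfolding P01_def by blast
qed

lemma p01_E2: "E2 a (p01 a)"
proof -
  have "red a - p01 a = 2 * map_poly g2 (red a) + f * 0"
    unfolding p01_def using poly_g12[of "red a"] by (simp add: algebra_simps)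
  then have "E2 (red a) (p01 a)" unfolding E2_def I_def by blast
  then show ?thesis using E2_trans E_E2 red(2) by blast
qed

lemma surj2: "\<exists>t\<in>T. E2 a t"
proof -
  have inj: "inj_on p01 T"
  proof (rule inj_onI)
    fix t s assume ts: "t \<in> T" "s \<in> T" "p01 t = p01 s"
    have "E2 t (p01 s)" using p01_E2[of t] ts(3) by simp
    then have "E2 t s" using E2_trans[OF _ E2_sym[OF p01_E2[of s]]] by blast
    then show "t = s" using T_inj2 ts by blast
  qed
  have sub: "p01 ` T \<subseteq> P01" using p01_P01 by blast
  have c1: "card (p01 ` T) = q" using card_image[OF inj] T_card by simp
  have fin: "finite P01" and c2: "card P01 \<le> q" using P01_fin_card by auto
  have "card (p01 ` T) \<le> card P01" by (rule card_mono[OF fin sub])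
  then have "card (p01 ` T) = card P01" using c1 c2 by simp
  then have "p01 ` T = P01" using card_subset_eq[OF fin sub] by blast
  then obtain t where t: "t \<in> T" "p01 a = p01 t" using p01_P01[of a] by auto
  have "E2 a (p01 t)" using p01_E2[of a] t(2) by simp
  then have "E2 a t" using E2_trans[OF _ E2_sym[OF p01_E2[of t]]] by blast
  then show ?thesis using t by blast
qed

definition tp :: "4 poly \<Rightarrow> 4 poly" where "tp a = (THE t. t \<in> T \<and> E2 a t)"

lemma tp_ex1: "\<exists>!t. t \<in> T \<and> E2 a t"
proof -
  obtain t where t: "t \<in> T" "E2 a t" using surj2 by blast
  moreover have "s = t" if "s \<in> T" "E2 a s" for s
    using T_inj2[OF that(1) t(1)] E2_trans[OF E2_sym[OF that(2)] t(2)] by blast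
  ultimately show ?thesis by blast
qed

lemma tp: "tp a \<in> T" "E2 a (tp a)"
  using theI'[OF tp_ex1[of a]] unfolding tp_def by blast+

lemma tp_unique: assumes "t \<in> T" "E2 a t" shows "tp a = t"
  using T_inj2[OF tp(1) assms(1) E2_trans[OF E2_sym[OF tp(2)] assms(2)]] .

lemma tp_cong: assumes "E2 a b" shows "tp a = tp b"
proof -
  have "E2 b (tp a)" by (rule E2_trans[OF E2_sym[OF assms] tp(2)])
  then show ?thesis using tp_unique[OF tp(1)] by metis
qed

lemma tp_T: "t \<in> T \<Longrightarrow> tp t = t" using tp_unique by simp

lemma I_2_div: assumes "f dvd 2 * w" shows "I w"
proof -
  define r where "r = red w"
  have r: "degree r < m" "E w r" using red unfolding r_def by auto
  have "f dvd 2 * (w - r)" using r(2) unfolding E_def by (rule dvd_mult)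
  then have "f dvd 2 * w - 2 * (w - r)" using assms by (intro dvd_diff)
  moreover have "2 * w - 2 * (w - r) = 2 * r" by (simp add: algebra_simps)
  ultimately have "f dvd 2 * r" by simp
  moreover have "degree (2 * r) < m"
  proof -
    have "degree (2 * r) \<le> degree r"
      by (rule degree_le) (simp add: coeff2 coeff_eq_0)
    then show ?thesis using r(1) by simp
  qed
  ultimately have "2 * r = 0" using canon_zero by blast
  then have "r = 2 * map_poly g2 r" by (rule poly_two_zero)
  moreover obtain k where "w - r = f * k" using r(2) unfolding E_def by (elim dvdE)
  ultimately have "w = 2 * map_poly g2 r + f * k" by (metis add.commute diff_add_cancel)
  then show ?thesis unfolding I_def by blast
qed

end

context gr begin

lemma tp_E: "z \<in> T \<Longrightarrow> E a z \<Longrightarrow> tp a = z"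
  using tp_unique E_E2 by blast

lemma T_mult_ex: assumes "x \<in> T" "y \<in> T" shows "\<exists>z\<in>T. E (x * y) z"
proof (cases "x = 0 \<or> y = 0")
  case True
  then have "x * y = 0" by auto
  then show ?thesis using T_0 E_refl by metis
next
  case False
  then obtain i j where i: "E x (\<beta> ^ i)" and j: "E y (\<beta> ^ j)" using T_cases assms by blast
  have "E (x * y) (\<beta> ^ i * \<beta> ^ j)" by (rule E_mult[OF i j])
  then have "E (x * y) (\<beta> ^ (i + j))" by (simp add: power_add)
  then have "E (x * y) (red (\<beta> ^ (i + j)))" using red(2) E_trans by blast
  then show ?thesis using red_T by blast
qed

lemma T_mult: assumes "x \<in> T" "y \<in> T" shows "E (x * y) (tp (x * y))"
proof -
  obtain z where z: "z \<in> T" "E (x * y) z" using T_mult_ex[OF assms] by blast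
  then show ?thesis using tp_E by simp
qed

lemma T_pow_ex: assumes "x \<in> T" shows "\<exists>z\<in>T. E (x ^ k) z"
proof (induction k)
  case 0 then show ?case using T_1 E_refl by (metis power_0)
next
  case (Suc k)
  then obtain z where z: "z \<in> T" "E (x ^ k) z" by blast
  obtain w where w: "w \<in> T" "E (x * z) w" using T_mult_ex[OF assms z(1)] by blast
  have "E (x * x ^ k) (x * z)" by (rule E_mult[OF E_refl z(2)])
  then have "E (x ^ Suc k) w" using w(2) E_trans by simp
  then show ?case using w(1) by blast
qed

lemma T_pow_q: assumes "x \<in> T" shows "E (x ^ q) x"
proof (cases "x = 0")
  case True
  have "q \<noteq> 0" using q_ge2 by simp
  then have "(0::4 poly) ^ q = 0" by (simp add: power_0_left)
  then show ?thesis using True by simp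
next
  case False
  then obtain i where i: "E x (\<beta> ^ i)" using T_cases assms by blast
  have "E (x ^ q) ((\<beta> ^ i) ^ q)" by (rule E_pow[OF i])
  moreover have "(\<beta> ^ i) ^ q = \<beta> ^ (n * i) * \<beta> ^ i"
    unfolding q_eq by (simp add: power_mult[symmetric] power_add[symmetric] algebra_simps)
  moreover have "E (\<beta> ^ (n * i) * \<beta> ^ i) (1 * \<beta> ^ i)" by (rule E_mult[OF b_nmult E_refl])
  ultimately have "E (x ^ q) (\<beta> ^ i)" using E_trans by simp
  then show ?thesis using E_trans E_sym[OF i] by blast
qed

lemma q_half: "((x::4 poly) ^ 2) ^ (2 ^ (m - 1)) = x ^ q"
proof -
  have h: "2 * 2 ^ (m - 1) = q" unfolding q_def using m_pos by (cases m) auto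
  have "((x::4 poly) ^ 2) ^ (2 ^ (m - 1)) = x ^ (2 * 2 ^ (m - 1))" by (simp only: power_mult)
  then show ?thesis by (simp only: h)
qed

lemma T_sq_inj: assumes "x \<in> T" "y \<in> T" "E (x ^ 2) (y ^ 2)" shows "x = y"
proof -
  have "E ((x ^ 2) ^ (2 ^ (m - 1))) ((y ^ 2) ^ (2 ^ (m - 1)))" by (rule E_pow[OF assms(3)])
  then have "E (x ^ q) (y ^ q)" by (simp only: q_half)
  then have "E x y" using T_pow_q[OF assms(1)] T_pow_q[OF assms(2)] E_trans E_sym by metis
  then show ?thesis using T_eq assms by blast
qed

lemma T_sq_inj2: assumes "x \<in> T" "y \<in> T" "E2 (x ^ 2) (y ^ 2)" shows "x = y"
proof -
  obtain zx where zx: "zx \<in> T" "E (x ^ 2) zx" using T_pow_ex[OF assms(1)] by blast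
  obtain zy where zy: "zy \<in> T" "E (y ^ 2) zy" using T_pow_ex[OF assms(2)] by blast
  have "E2 zx zy"
    using E2_trans[OF E2_trans[OF E2_sym[OF E_E2[OF zx(2)]] assms(3)] E_E2[OF zy(2)]] .
  then have "zx = zy" using T_inj2 zx zy by blast
  then have "E (x ^ 2) (y ^ 2)" using zx zy E_trans E_sym by metis
  then show ?thesis using T_sq_inj assms by blast
qed

lemma T_sqrt: assumes "x \<in> T" shows "\<exists>g\<in>T. E (g ^ 2) x"
proof -
  obtain g where g: "g \<in> T" "E (x ^ (2 ^ (m - 1))) g" using T_pow_ex[OF assms] by blast
  have "E ((x ^ (2 ^ (m - 1))) ^ 2) (g ^ 2)" by (rule E_pow[OF g(2)])
  moreover have "(x ^ (2 ^ (m - 1))) ^ 2 = x ^ q"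
    using q_half[of x] by (simp only: power_mult[symmetric] mult.commute)
  ultimately have "E (g ^ 2) (x ^ q)" using E_sym by simp
  then have "E (g ^ 2) x" using T_pow_q[OF assms] E_trans by blast
  then show ?thesis using g(1) by blast
qed

lemma T_inv: assumes "x \<in> T" "x \<noteq> 0" shows "\<exists>y\<in>T. E (x * y) 1"
proof -
  obtain i where i: "E x (\<beta> ^ i)" using T_cases assms by blast
  define y where "y = red (\<beta> ^ ((n - 1) * i))"
  have "E (x * y) (\<beta> ^ i * \<beta> ^ ((n - 1) * i))"
    unfolding y_def by (rule E_mult[OF i E_sym[OF red(2)]])
  then have "E (x * y) 1" unfolding b_cancel using b_nmult E_trans by blast
  then show ?thesis unfolding y_def using red_T by blast
qed

lemma T_nz2: assumes "x \<in> T" "x \<noteq> 0" shows "\<not> E2 x 0"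
proof
  assume h: "E2 x 0"
  obtain i where i: "E x (\<beta> ^ i)" using T_cases assms by blast
  have "E2 (\<beta> ^ i) 0" by (rule E2_trans[OF E2_sym[OF E_E2[OF i]] h])
  then show False using E2_b_zero by blast
qed

lemma T_zero_div: assumes "x \<in> T" "y \<in> T" "E2 (x * y) 0" shows "x = 0 \<or> y = 0"
proof (rule ccontr)
  assume "\<not> (x = 0 \<or> y = 0)"
  then obtain z where z: "z \<in> T" "E (x * y) z" using T_mult_ex[OF assms(1,2)] by blast
  have "z \<noteq> 0"
  proof
    assume "z = 0"
    have "\<not> (x = 0 \<or> y = 0)" by fact
    then obtain xi where xi: "xi \<in> T" "E (x * xi) 1" using T_inv assms(1) by blast
    have h1: "E (x * y * xi) 0" using E_mult[OF z(2) E_refl[of xi]] \<open>z = 0\<close> by simp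
    have h2: "E (x * xi * y) (1 * y)" by (rule E_mult[OF xi(2) E_refl[of y]])
    have "x * xi * y = x * y * xi" by (simp only: mult_ac)
    then have h3: "E (x * y * xi) y" using h2 by (simp only: mult_1_left)
    have "E y 0" by (rule E_trans[OF E_sym[OF h3] h1])
    then show False using T_eq[OF assms(2) T_0] \<open>\<not> (x = 0 \<or> y = 0)\<close> by blast
  qed
  moreover have "E2 z 0" by (rule E2_trans[OF E2_sym[OF E_E2[OF z(2)]] assms(3)])
  ultimately show False using T_nz2 z(1) by blast
qed

end

lemma id_sum3: "((x::'a::comm_ring_1) + y + z)^2 + 2 * (x*y + y*z + z*x) = x^2 + y^2 + z^2 + 2 * (2 * (x*y + y*z + z*x))"
  by (simp add: power2_eq_square algebra_simps)
lemma id_sum3m: "((x::'a::comm_ring_1) + y + z)^2 + 2 * (x*y + y*z + z*x + z^2) = x^2 + y^2 - z^2 + 2 * (2 * (x*y + y*z + z*x + z^2))"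
  by (simp add: power2_eq_square algebra_simps)
lemma id_scale: "((a::'a::comm_ring_1)^2 + a*b + b^2) * c^2 = (a*c)^2 + (a*c)*(b*c) + (b*c)^2"
  by (simp add: power2_eq_square algebra_simps)
lemma id_cube: "((t::'a::comm_ring_1) - 1) * (t^2 + t*1 + 1^2) = t^3 - 1"
  by (simp add: power2_eq_square power3_eq_cube algebra_simps)
lemma id_three: "(1::'a::comm_ring_1) + 1 + 1 - 1 = 2 * 1" by simp
lemma id_negU: "(U::'a::comm_ring_1) + 2 * U - (- U) = 2 * (2 * U)" by (simp add: algebra_simps)

lemma nmod3_aux: "odd m \<Longrightarrow> (2::nat) ^ m mod 3 = 2"
proof -
  assume "odd m"
  then obtain k where k: "m = 2 * k + 1" using oddE by blast
  have "(4::nat) ^ k mod 3 = (4 mod 3) ^ k mod 3" by (rule power_mod[symmetric])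
  then have h: "(4::nat) ^ k mod 3 = 1" by simp
  have "(2::nat) ^ m = 2 * 4 ^ k" unfolding k by (simp add: power_mult)
  then have "(2::nat) ^ m mod 3 = (2 * (4 ^ k mod 3)) mod 3" by (simp add: mod_mult_right_eq)
  then show ?thesis using h by simp
qed

context gr begin

lemma E2_by: "P - Q = 2 * W \<Longrightarrow> E2 P Q" unfolding E2_def using I_2 by simp

lemma n_coprime3: "coprime n 3"
proof -
  have a: "(2::nat) ^ m mod 3 = 2" by (rule nmod3_aux[OF oddm])
  have "n mod 3 = 1"
  proof -
    have "(2::nat) ^ m = 3 * ((2::nat) ^ m div 3) + 2" using a by (metis div_mult_mod_eq mult.commute)
    then show ?thesis unfolding n_def by presburger
  qed
  then have "gcd n 3 = gcd 3 1" by (metis gcd.commute gcd_red_nat)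
  then show ?thesis by (simp add: coprime_iff_gcd_eq_1)
qed

lemma decomp: "\<exists>U V. U \<in> T \<and> V \<in> T \<and> E r (U + 2 * V)"
proof -
  obtain c k where ck: "r = tp r + 2 * c + f * k" using E2_exp[OF tp(2)[of r]] by blast
  have "E (2 * c) (2 * tp c)" by (rule E2_double[OF tp(2)])
  then have "E (tp r + 2 * c) (tp r + 2 * tp c)" by (rule E_add[OF E_refl])
  moreover have "r - (tp r + 2 * c) = f * k" using ck by (simp add: algebra_simps)
  then have "E r (tp r + 2 * c)" unfolding E_def by simp
  ultimately show ?thesis using tp(1) E_trans by blast
qed

lemma decomp_unique: assumes "U \<in> T" "V \<in> T" "U' \<in> T" "V' \<in> T" "E (U + 2 * V) (U' + 2 * V')"
  shows "U = U' \<and> V = V'"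
proof -
  obtain k where k: "U + 2 * V - (U' + 2 * V') = f * k" using assms(5) unfolding E_def by (elim dvdE)
  then have "U - U' = 2 * (V' - V) + f * k" by (simp add: algebra_simps)
  then have "E2 U U'" unfolding E2_def I_def by blast
  then have UU: "U = U'" using T_inj2 assms by blast
  then have "E (2 * V) (2 * V')" using assms(5) unfolding E_def by simp
  then have "f dvd 2 * (V - V')" unfolding E_def by (simp add: algebra_simps)
  then have "I (V - V')" by (rule I_2_div)
  then have "V = V'" using T_inj2 assms unfolding E2_def by blast
  then show ?thesis using UU by simp
qed

lemma keyD: assumes u: "u \<in> T" and UV: "U \<in> T" "V \<in> T" and uU: "E (u ^ 2) U"
  shows "E (a ^ 2 + 2 * c) (U + 2 * V) \<longleftrightarrow> E2 a u \<and> E2 c V"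
proof
  assume h: "E2 a u \<and> E2 c V"
  have "E (a ^ 2) U" using E2_sq_E[of a u] h uU E_trans by blast
  moreover have "E (2 * c) (2 * V)" using E2_double h by blast
  ultimately show "E (a ^ 2 + 2 * c) (U + 2 * V)" by (rule E_add)
next
  assume h: "E (a ^ 2 + 2 * c) (U + 2 * V)"
  define A where "A = tp a"
  define C where "C = tp c"
  have A: "A \<in> T" "E2 a A" unfolding A_def using tp by auto
  have C: "C \<in> T" "E2 c C" unfolding C_def using tp by auto
  have h0: "E (a ^ 2 + 2 * c) (A ^ 2 + 2 * C)" by (intro E_add E2_sq_E E2_double A C)
  define A2 where "A2 = tp (A * A)"
  have A2: "A2 \<in> T" "E (A ^ 2) A2" unfolding A2_def
    using tp(1) apply blast
    using T_mult[OF A(1) A(1)] unfolding power2_eq_square .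
  have h1: "E (A ^ 2 + 2 * C) (A2 + 2 * C)" by (rule E_add[OF A2(2) E_refl])
  have "E (A2 + 2 * C) (U + 2 * V)"
    by (rule E_trans[OF E_sym[OF E_trans[OF h0 h1]] h])
  then have eqs: "A2 = U" "C = V" using decomp_unique[OF A2(1) C(1) UV] by auto
  have "E (A ^ 2) U" using A2(2) eqs(1) by simp
  then have "E (A ^ 2) (u ^ 2)" using E_trans[OF _ E_sym[OF uU]] by blast
  then have "A = u" using T_sq_inj A(1) u by blast
  then show "E2 a u \<and> E2 c V" using A(2) C(2) eqs(2) by simp
qed

end

context gr begin

lemma T_nz_of_E2: assumes "c \<in> T" "c \<noteq> 0" "E2 a c" "a \<in> T" shows "a \<noteq> 0"
proof
  assume "a = 0"
  then have "E2 c 0" using E2_sym[OF assms(3)] by simp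
  then show False using T_nz2 assms by blast
qed

lemma Q2: assumes c: "c \<in> T"
  shows "card {p \<in> T \<times> T. E2 (fst p * snd p) c} = (if c = 0 then 2 * q - 1 else q - 1)"
proof (cases "c = 0")
  case True
  have eq: "{p \<in> T \<times> T. E2 (fst p * snd p) c} = ({0} \<times> T) \<union> (T \<times> {0})"
  proof (rule set_eqI)
    fix p :: "4 poly \<times> 4 poly"
    obtain a b where p: "p = (a, b)" by (cases p)
    show "p \<in> {p \<in> T \<times> T. E2 (fst p * snd p) c} \<longleftrightarrow> p \<in> ({0} \<times> T) \<union> (T \<times> {0})"
      unfolding p True using T_zero_div[of a b] by auto
  qed
  have int: "({0} \<times> T) \<inter> (T \<times> {0}) = {(0, 0)}" by auto
  have "card ({0} \<times> T) + card (T \<times> {0}) = card (({0} \<times> T) \<union> (T \<times> {0})) + card {(0::4 poly, 0::4 poly)}"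
    using card_Un_Int[of "{0} \<times> T" "T \<times> {0}"] T_fin int by simp
  then have "card (({0} \<times> T) \<union> (T \<times> {0})) = 2 * q - 1" using T_card by (simp add: card_cartesian_product)
  then show ?thesis using eq True by simp
next
  case False
  define S where "S = {p \<in> T \<times> T. E2 (fst p * snd p) c}"
  have "bij_betw fst S (T - {0})"
  proof (rule bij_betw_imageI)
    show "inj_on fst S"
    proof (rule inj_onI)
      fix p p' assume pp: "p \<in> S" "p' \<in> S" "fst p = fst p'"
      obtain a b where p: "p = (a, b)" by (cases p)
      obtain a' b' where p': "p' = (a', b')" by (cases p')
      have ab: "a \<in> T" "b \<in> T" "b' \<in> T" "E2 (a * b) c" "E2 (a * b') c"
        using pp unfolding p p' S_def by auto
      have "a \<noteq> 0" using T_nz_of_E2[OF c False ab(4)] T_mult_ex ab by (metis mult_zero_left)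
      then obtain ai where ai: "ai \<in> T" "E (a * ai) 1" using T_inv ab(1) by blast
      have "E2 (a * b) (a * b')" using E2_trans[OF ab(4) E2_sym[OF ab(5)]] .
      then have "E2 (a * b * ai) (a * b' * ai)" by (rule E2_mult[OF _ E2_refl])
      moreover have "a * b * ai = (a * ai) * b" "a * b' * ai = (a * ai) * b'" by (simp_all only: mult_ac)
      moreover have "E2 ((a * ai) * b) (1 * b)" "E2 ((a * ai) * b') (1 * b')"
        using E2_mult[OF E_E2[OF ai(2)] E2_refl] by blast+
      ultimately have "E2 b b'" using E2_trans E2_sym by (metis mult_1_left)
      then have "b = b'" using T_inj2 ab by blast
      then show "p = p'" using pp(3) p p' by simp
    qed
  next
    show "fst ` S = T - {0}"
    proof
      show "fst ` S \<subseteq> T - {0}"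
      proof
        fix a assume "a \<in> fst ` S"
        then obtain b where ab: "(a, b) \<in> S" by force
        then have "a \<in> T" "b \<in> T" "E2 (a * b) c" unfolding S_def by auto
        moreover have "a \<noteq> 0"
        proof
          assume "a = 0"
          then have "E2 c 0" using E2_sym[OF \<open>E2 (a * b) c\<close>] by simp
          then show False using T_nz2 c False by blast
        qed
        ultimately show "a \<in> T - {0}" by blast
      qed
    next
      show "T - {0} \<subseteq> fst ` S"
      proof
        fix a assume a: "a \<in> T - {0}"
        then obtain ai where ai: "ai \<in> T" "E (a * ai) 1" using T_inv by blast
        define b where "b = tp (ai * c)"
        have "E2 (a * b) (a * (ai * c))" unfolding b_def by (rule E2_mult[OF E2_refl E2_sym[OF tp(2)]])
        moreover have "a * (ai * c) = (a * ai) * c" by (simp only: mult_ac)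
        moreover have "E2 ((a * ai) * c) (1 * c)" by (rule E2_mult[OF E_E2[OF ai(2)] E2_refl])
        ultimately have "E2 (a * b) c" using E2_trans by (metis mult_1_left)
        then have "(a, b) \<in> S" unfolding S_def b_def using a tp(1) by auto
        then show "a \<in> fst ` S" by force
      qed
    qed
  qed
  then have "card S = card (T - {0})" by (rule bij_betw_same_card)
  also have "\<dots> = q - 1" using T_card T_fin by simp
  finally show ?thesis using False unfolding S_def by simp
qed

end

lemma part_card:
  assumes "finite A" "finite C" "h ` A \<subseteq> C"
  shows "card A = (\<Sum>c\<in>C. card {x \<in> A. h x = c})"
proof -
  have "A = (\<Union>c\<in>C. {x \<in> A. h x = c})" using assms(3) by auto
  moreover have "card (\<Union>c\<in>C. {x \<in> A. h x = c}) = (\<Sum>c\<in>C. card {x \<in> A. h x = c})"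
    by (rule card_UN_disjoint) (use assms in auto)
  ultimately show ?thesis by simp
qed

context gr begin

lemma cube_zero: assumes ab: "a \<in> T" "b \<in> T" and h: "E2 (a ^ 2 + a * b + b ^ 2) 0"
  shows "a = 0 \<and> b = 0"
proof (cases "b = 0")
  case True
  then have "E2 (a * a) 0" using h by (simp add: power2_eq_square)
  then have "a = 0" using T_zero_div ab by blast
  then show ?thesis using True by simp
next
  case False
  obtain bi where bi: "bi \<in> T" "E (b * bi) 1" using T_inv ab(2) False by blast
  define t where "t = tp (a * bi)"
  have t: "t \<in> T" "E2 (a * bi) t" unfolding t_def using tp by auto
  have "E2 ((a ^ 2 + a * b + b ^ 2) * bi ^ 2) (0 * bi ^ 2)" by (rule E2_mult[OF h E2_refl])
  then have "E2 ((a * bi) ^ 2 + (a * bi) * (b * bi) + (b * bi) ^ 2) 0" by (simp only: id_scale mult_zero_left)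
  moreover have "E2 ((a * bi) ^ 2 + (a * bi) * (b * bi) + (b * bi) ^ 2) (t ^ 2 + t * 1 + 1 ^ 2)"
    using t(2) E_E2[OF bi(2)] by (intro E2_add E2_mult E2_pow)
  ultimately have t0: "E2 (t ^ 2 + t * 1 + 1 ^ 2) 0" using E2_trans E2_sym by blast
  have "E2 ((t - 1) * (t ^ 2 + t * 1 + 1 ^ 2)) ((t - 1) * 0)" by (rule E2_mult[OF E2_refl t0])
  then have "E2 (t ^ 3 - 1) 0" by (simp only: id_cube mult_zero_right)
  then have "E2 (t ^ 3 - 1 + 1) (0 + 1)" by (rule E2_add[OF _ E2_refl])
  then have t3: "E2 (t ^ 3) 1" by simp
  have "t \<noteq> 0"
  proof
    assume "t = 0"
    then have "E2 1 0" using t0 by (simp add: power2_eq_square)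
    then show False using not_E2_1_0 by blast
  qed
  then obtain i where i: "E t (\<beta> ^ i)" using T_cases t(1) by blast
  have "E (t ^ 3) ((\<beta> ^ i) ^ 3)" by (rule E_pow[OF i])
  then have "E2 ((\<beta> ^ i) ^ 3) 1" using E2_trans[OF E2_sym[OF E_E2] t3] by blast
  then have "E2 (\<beta> ^ (i * 3)) 1" by (simp only: power_mult)
  then have "n dvd i * 3" by (rule E2_b_one)
  then have "n dvd i" using n_coprime3 by (simp add: coprime_dvd_mult_left_iff)
  then have "E (\<beta> ^ i) 1" using E_b_one by blast
  then have "t = 1" using T_eq[OF t(1) T_1] E_trans[OF i] by blast
  then have "E2 (1 + 1 + 1) 0" using t0 by (simp only: power_one mult_1_right)
  moreover have "E2 (1 + 1 + 1) 1" by (rule E2_by[OF id_three])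
  ultimately have "E2 1 0" using E2_trans E2_sym by blast
  then show ?thesis using not_E2_1_0 by blast
qed

definition Sol1 :: "4 poly \<Rightarrow> (4 poly \<times> 4 poly) set" where
  "Sol1 c = {p \<in> T \<times> T. E2 (fst p ^ 2 + fst p * snd p + snd p ^ 2) c}"

lemma Sol1_fin: "finite (Sol1 c)"
  unfolding Sol1_def using T_fin by simp

lemma Sol1_0: "card (Sol1 0) = 1"
proof -
  have "Sol1 0 = {(0, 0)}"
  proof (rule set_eqI)
    fix p :: "4 poly \<times> 4 poly"
    obtain a b where p: "p = (a, b)" by (cases p)
    have "E2 ((0::4 poly) ^ 2 + 0 * 0 + 0 ^ 2) 0" by (simp add: power2_eq_square)
    then show "p \<in> Sol1 0 \<longleftrightarrow> p \<in> {(0, 0)}"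
      unfolding p Sol1_def using cube_zero[of a b] by auto
  qed
  then show ?thesis by simp
qed

lemma Sol1_scale: assumes c: "c \<in> T" "c \<noteq> 0" shows "card (Sol1 c) = card (Sol1 1)"
proof -
  obtain g where g: "g \<in> T" "E (g ^ 2) c" using T_sqrt[OF c(1)] by blast
  have "g \<noteq> 0"
  proof
    assume "g = 0"
    then have "E 0 c" using g(2) by (simp add: power2_eq_square)
    then show False using T_eq[OF T_0 c(1)] c(2) by blast
  qed
  then obtain gi where gi: "gi \<in> T" "E (g * gi) 1" using T_inv g(1) by blast
  define \<phi> where "\<phi> p = (tp (g * fst p), tp (g * snd p))" for p :: "4 poly \<times> 4 poly"
  define \<psi> where "\<psi> p = (tp (gi * fst p), tp (gi * snd p))" for p :: "4 poly \<times> 4 poly"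
  have bk: "tp (gi * tp (g * a)) = a" if "a \<in> T" for a
  proof (rule tp_unique[OF that])
    have "E2 (gi * tp (g * a)) (gi * (g * a))" by (rule E2_mult[OF E2_refl E2_sym[OF tp(2)]])
    moreover have "gi * (g * a) = (g * gi) * a" by (simp only: mult_ac)
    moreover have "E2 ((g * gi) * a) (1 * a)" by (rule E2_mult[OF E_E2[OF gi(2)] E2_refl])
    ultimately show "E2 (gi * tp (g * a)) a" using E2_trans by (metis mult_1_left)
  qed
  have forth: "tp (g * tp (gi * a)) = a" if "a \<in> T" for a
  proof (rule tp_unique[OF that])
    have "E2 (g * tp (gi * a)) (g * (gi * a))" by (rule E2_mult[OF E2_refl E2_sym[OF tp(2)]])
    moreover have "g * (gi * a) = (g * gi) * a" by (simp only: mult_ac)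
    moreover have "E2 ((g * gi) * a) (1 * a)" by (rule E2_mult[OF E_E2[OF gi(2)] E2_refl])
    ultimately show "E2 (g * tp (gi * a)) a" using E2_trans by (metis mult_1_left)
  qed
  have key: "E2 (tp (g * a) ^ 2 + tp (g * a) * tp (g * b) + tp (g * b) ^ 2) ((a ^ 2 + a * b + b ^ 2) * g ^ 2)" for a b
  proof -
    have "E2 (tp (g * a) ^ 2 + tp (g * a) * tp (g * b) + tp (g * b) ^ 2) ((a * g) ^ 2 + (a * g) * (b * g) + (b * g) ^ 2)"
      using E2_sym[OF tp(2)[of "g * a"]] E2_sym[OF tp(2)[of "g * b"]]
      by (intro E2_add E2_mult E2_pow) (simp_all add: mult.commute)
    then show ?thesis by (simp only: id_scale)
  qed
  have "bij_betw \<phi> (Sol1 1) (Sol1 c)"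
  proof (rule bij_betw_byWitness[where f' = \<psi>])
    show "\<forall>p\<in>Sol1 1. \<psi> (\<phi> p) = p" unfolding Sol1_def \<phi>_def \<psi>_def using bk by auto
    show "\<forall>p\<in>Sol1 c. \<phi> (\<psi> p) = p" unfolding Sol1_def \<phi>_def \<psi>_def using forth by auto
    show "\<phi> ` Sol1 1 \<subseteq> Sol1 c"
    proof
      fix p assume "p \<in> \<phi> ` Sol1 1"
      then obtain a b where ab: "(a, b) \<in> Sol1 1" "p = \<phi> (a, b)" by force
      then have h: "E2 (a ^ 2 + a * b + b ^ 2) 1" unfolding Sol1_def by simp
      have "E2 ((a ^ 2 + a * b + b ^ 2) * g ^ 2) (1 * g ^ 2)" by (rule E2_mult[OF h E2_refl])
      then have "E2 ((a ^ 2 + a * b + b ^ 2) * g ^ 2) c" using E2_trans E_E2[OF g(2)] by simp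
      then have "E2 (tp (g * a) ^ 2 + tp (g * a) * tp (g * b) + tp (g * b) ^ 2) c"
        using key E2_trans by blast
      then show "p \<in> Sol1 c" unfolding Sol1_def ab(2) \<phi>_def using tp(1) by simp
    qed
    show "\<psi> ` Sol1 c \<subseteq> Sol1 1"
    proof
      fix p assume "p \<in> \<psi> ` Sol1 c"
      then obtain a b where ab: "(a, b) \<in> Sol1 c" "p = \<psi> (a, b)" by force
      then have abT: "a \<in> T" "b \<in> T" and h: "E2 (a ^ 2 + a * b + b ^ 2) c" unfolding Sol1_def by auto
      define a' where "a' = tp (gi * a)"
      define b' where "b' = tp (gi * b)"
      have "tp (g * a') = a" "tp (g * b') = b" unfolding a'_def b'_def using forth abT by auto
      then have "E2 (a ^ 2 + a * b + b ^ 2) ((a' ^ 2 + a' * b' + b' ^ 2) * g ^ 2)" using key[of a' b'] by simp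
      then have h2: "E2 ((a' ^ 2 + a' * b' + b' ^ 2) * g ^ 2) c" using E2_trans E2_sym h by blast
      define X where "X = a' ^ 2 + a' * b' + b' ^ 2"
      have m1: "E2 (X * g ^ 2 * gi ^ 2) (c * gi ^ 2)" unfolding X_def by (rule E2_mult[OF h2 E2_refl])
      have eq1: "X * g ^ 2 * gi ^ 2 = X * (g * gi) ^ 2" by (simp add: power_mult_distrib mult_ac)
      have m2: "E2 (X * (g * gi) ^ 2) (X * 1 ^ 2)" by (intro E2_mult E2_refl E2_pow E_E2 gi(2))
      have m3: "E2 (c * gi ^ 2) (g ^ 2 * gi ^ 2)" by (intro E2_mult E2_refl E_E2 E_sym[OF g(2)])
      have eq2: "g ^ 2 * gi ^ 2 = (g * gi) ^ 2" by (simp add: power_mult_distrib)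
      have m4: "E2 ((g * gi) ^ 2) (1 ^ 2)" by (intro E2_pow E_E2 gi(2))
      have "E2 X (X * (g * gi) ^ 2)" using E2_sym[OF m2] by simp
      then have "E2 X (X * g ^ 2 * gi ^ 2)" using eq1 by simp
      then have "E2 X (c * gi ^ 2)" using m1 by (rule E2_trans)
      then have "E2 X (g ^ 2 * gi ^ 2)" using m3 by (rule E2_trans)
      then have "E2 X ((g * gi) ^ 2)" using eq2 by simp
      then have "E2 X (1 ^ 2)" using m4 by (rule E2_trans)
      then have "E2 (a' ^ 2 + a' * b' + b' ^ 2) 1" unfolding X_def by simp
      then show "p \<in> Sol1 1" unfolding Sol1_def ab(2) \<psi>_def a'_def b'_def using tp(1) by simp
    qed
  qed
  then show ?thesis by (metis bij_betw_same_card)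
qed

lemma Q1: assumes c: "c \<in> T" shows "card (Sol1 c) = (if c = 0 then 1 else q + 1)"
proof (cases "c = 0")
  case True then show ?thesis using Sol1_0 by simp
next
  case False
  define h where "h p = tp (fst p ^ 2 + fst p * snd p + snd p ^ 2)" for p :: "4 poly \<times> 4 poly"
  have fibre: "{p \<in> T \<times> T. h p = d} = Sol1 d" if "d \<in> T" for d
    unfolding Sol1_def h_def using tp_unique[OF that] tp(2) by auto
  have "card (T \<times> T) = (\<Sum>d\<in>T. card {p \<in> T \<times> T. h p = d})"
    by (rule part_card) (use T_fin tp(1) in \<open>auto simp: h_def\<close>)
  also have "\<dots> = (\<Sum>d\<in>T. card (Sol1 d))" using fibre by simp
  also have "\<dots> = card (Sol1 0) + (\<Sum>d\<in>T - {0}. card (Sol1 d))"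
    by (rule sum.remove[OF T_fin T_0])
  also have "\<dots> = 1 + (\<Sum>d\<in>T - {0}. card (Sol1 1))"
  proof -
    have "(\<Sum>d\<in>T - {0}. card (Sol1 d)) = (\<Sum>d\<in>T - {0}. card (Sol1 1))"
      by (rule sum.cong) (auto intro: Sol1_scale)
    then show ?thesis using Sol1_0 by simp
  qed
  also have "\<dots> = 1 + (q - 1) * card (Sol1 1)" using T_card T_fin by simp
  finally have eq: "q * q = 1 + (q - 1) * card (Sol1 1)" using T_card by (simp add: card_cartesian_product)
  have "q * q = 1 + (q - 1) * (q + 1)" using q_ge2 by (cases q) (auto simp: algebra_simps)
  then have "(q - 1) * card (Sol1 1) = (q - 1) * (q + 1)" using eq by simp
  moreover have ne: "q - 1 \<noteq> 0" using q_ge2 by simp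
  ultimately have "card (Sol1 1) = q + 1" using mult_left_cancel[OF ne] by blast
  then show ?thesis using Sol1_scale[OF c False] False by simp
qed

end

lemma id_I1: "((x::'a::comm_ring_1) + u)^2 + (x + u) * (y + u) + (y + u)^2 - (x*y + (x + y + u) * (x + y) + u^2) = 2 * (x*u + y*u + u^2 - x*y)"
  by (simp add: power2_eq_square algebra_simps)
lemma id_I4: "((x::'a::comm_ring_1) + u) * (y + u) - (x*y + y*(x+y+u) + (x+y+u)*x + (x+y+u)^2) = 2 * (- ((x+y)^2 + u*(x+y)))"
  by (simp add: power2_eq_square algebra_simps)
lemma id_e2: "(x::'a::comm_ring_1)*y + (x + y + u) * (x + y) + u^2 = (x*y + y*(x+y+u) + (x+y+u)*x) + u^2"
  by (simp add: algebra_simps)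
lemma id_sum: "((x::'a::comm_ring_1) + y + z - u) - (z - (x + y + u)) = 2 * (x + y)"
  by (simp add: algebra_simps)
lemma id_uu: "(x::'a::comm_ring_1) + u + u - x = 2 * u" by (simp add: algebra_simps)
lemma id_uuu: "(x::'a::comm_ring_1) + u + (y + u) + u - (x + y + u) = 2 * u" by (simp add: algebra_simps)
lemma id_uuu2: "(a::'a::comm_ring_1) + u + (b + u) + u - (a + b + u) = 2 * u" by (simp add: algebra_simps)

context gr begin

lemma I_shift: "A - B = 2 * W \<Longrightarrow> I A \<longleftrightarrow> I B"
proof -
  assume h: "A - B = 2 * W"
  have "A = B + 2 * W" "B = A + 2 * (- W)" using h by (simp_all add: algebra_simps)
  then show ?thesis using I_add I_2 by metis
qed

lemma sum_iff: "E2 (x + y + z) u \<longleftrightarrow> E2 z (x + y + u)"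
  unfolding E2_def by (rule I_shift[OF id_sum])

lemma E2_iff_left: "E2 A B \<Longrightarrow> E2 A w \<longleftrightarrow> E2 B w"
  using E2_trans E2_sym by blast

lemma tp_back: assumes "x \<in> T" shows "tp (tp (x + u) + u) = x"
proof (rule tp_unique[OF assms])
  have "E2 (tp (x + u) + u) (x + u + u)" by (rule E2_add[OF E2_sym[OF tp(2)] E2_refl])
  moreover have "E2 (x + u + u) x" by (rule E2_by[OF id_uu])
  ultimately show "E2 (tp (x + u) + u) x" by (rule E2_trans)
qed

lemma tp_back3: assumes "z \<in> T" "E2 z (x + y + u)" shows "tp (tp (x + u) + tp (y + u) + u) = z"
proof (rule tp_unique[OF assms(1)])
  have "E2 (tp (x + u) + tp (y + u) + u) (x + u + (y + u) + u)"
    by (intro E2_add E2_sym[OF tp(2)] E2_refl)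
  moreover have "E2 (x + u + (y + u) + u) (x + y + u)" by (rule E2_by[OF id_uuu])
  ultimately show "E2 (tp (x + u) + tp (y + u) + u) z" using E2_trans E2_sym assms(2) by blast
qed

lemma Kbij:
  assumes u: "u \<in> T"
    and hyp: "\<And>x y z a b. x \<in> T \<Longrightarrow> y \<in> T \<Longrightarrow> z \<in> T \<Longrightarrow> a \<in> T \<Longrightarrow> b \<in> T \<Longrightarrow>
      E2 a (x + u) \<Longrightarrow> E2 b (y + u) \<Longrightarrow> E2 z (x + y + u) \<Longrightarrow> (P x y z \<longleftrightarrow> Qp a b)"
  shows "card {p \<in> T \<times> T \<times> T. E2 (fst p + fst (snd p) + snd (snd p)) u \<and> P (fst p) (fst (snd p)) (snd (snd p))}
       = card {p \<in> T \<times> T. Qp (fst p) (snd p)}"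
proof -
  define S where "S = {p \<in> T \<times> T \<times> T. E2 (fst p + fst (snd p) + snd (snd p)) u \<and> P (fst p) (fst (snd p)) (snd (snd p))}"
  define R where "R = {p \<in> T \<times> T. Qp (fst p) (snd p)}"
  define h where "h p = (tp (fst p + u), tp (fst (snd p) + u))" for p :: "4 poly \<times> 4 poly \<times> 4 poly"
  define k where "k p = (tp (fst p + u), tp (snd p + u), tp (fst p + snd p + u))" for p :: "4 poly \<times> 4 poly"
  have "bij_betw h S R"
  proof (rule bij_betw_byWitness[where f' = k])
    show "\<forall>p\<in>S. k (h p) = p"
    proof
      fix p assume "p \<in> S"
      then obtain x y z where p: "p = (x, y, z)" "x \<in> T" "y \<in> T" "z \<in> T" "E2 (x + y + z) u"
        unfolding S_def by auto
      have "E2 z (x + y + u)" using p(5) sum_iff by blast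
      then show "k (h p) = p" unfolding p h_def k_def using tp_back p tp_back3 by simp
    qed
    show "\<forall>p\<in>R. h (k p) = p" unfolding R_def h_def k_def using tp_back by auto
    show "h ` S \<subseteq> R"
    proof
      fix q assume "q \<in> h ` S"
      then obtain x y z where p: "(x, y, z) \<in> S" "q = h (x, y, z)" by force
      then have xyz: "x \<in> T" "y \<in> T" "z \<in> T" "E2 (x + y + z) u" "P x y z" unfolding S_def by auto
      have "E2 z (x + y + u)" using xyz(4) sum_iff by blast
      then have "Qp (tp (x + u)) (tp (y + u))"
        using hyp[OF xyz(1-3) tp(1) tp(1) E2_sym[OF tp(2)] E2_sym[OF tp(2)]] xyz(5) by blast
      then show "q \<in> R" unfolding R_def p(2) h_def using tp(1) by simp
    qed
    show "k ` R \<subseteq> S"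
    proof
      fix q assume "q \<in> k ` R"
      then obtain a b where p: "(a, b) \<in> R" "q = k (a, b)" by force
      then have ab: "a \<in> T" "b \<in> T" "Qp a b" unfolding R_def by auto
      define x where "x = tp (a + u)"
      define y where "y = tp (b + u)"
      define z where "z = tp (a + b + u)"
      have xyzT: "x \<in> T" "y \<in> T" "z \<in> T" unfolding x_def y_def z_def using tp(1) by auto
      have ax: "E2 a (x + u)" unfolding x_def using tp_back[OF ab(1)] tp(2) E2_sym by metis
      have by': "E2 b (y + u)" unfolding y_def using tp_back[OF ab(2)] tp(2) E2_sym by metis
      have "E2 (x + y + u) (a + u + (b + u) + u)" unfolding x_def y_def
        by (intro E2_add E2_sym[OF tp(2)] E2_refl)
      moreover have "E2 (a + u + (b + u) + u) (a + b + u)" by (rule E2_by[OF id_uuu2])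
      moreover have "E2 (a + b + u) z" unfolding z_def by (rule tp(2))
      ultimately have zxy: "E2 z (x + y + u)" using E2_trans E2_sym by blast
      have "P x y z" using hyp[OF xyzT ab(1,2) ax by' zxy] ab(3) by blast
      moreover have "E2 (x + y + z) u" using zxy sum_iff by blast
      ultimately show "q \<in> S" unfolding S_def p(2) k_def x_def y_def z_def using xyzT
        unfolding x_def y_def z_def by simp
    qed
  qed
  then show ?thesis unfolding S_def R_def by (rule bij_betw_same_card)
qed

lemma K1: assumes u: "u \<in> T" and w: "w \<in> T"
  shows "card {p \<in> T \<times> T \<times> T. E2 (fst p + fst (snd p) + snd (snd p)) u \<and>
            E2 (fst p * fst (snd p) + fst (snd p) * snd (snd p) + snd (snd p) * fst p) w}
       = card (Sol1 (tp (w + u ^ 2)))"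
proof -
  have "card {p \<in> T \<times> T \<times> T. E2 (fst p + fst (snd p) + snd (snd p)) u \<and>
            E2 (fst p * fst (snd p) + fst (snd p) * snd (snd p) + snd (snd p) * fst p) w}
      = card {p \<in> T \<times> T. E2 (fst p ^ 2 + fst p * snd p + snd p ^ 2) (tp (w + u ^ 2))}"
  proof (rule Kbij[OF u])
    fix x y z a b assume T5: "x \<in> T" "y \<in> T" "z \<in> T" "a \<in> T" "b \<in> T"
      and h: "E2 a (x + u)" "E2 b (y + u)" "E2 z (x + y + u)"
    have "E2 (a ^ 2 + a * b + b ^ 2) ((x + u) ^ 2 + (x + u) * (y + u) + (y + u) ^ 2)"
      using h by (intro E2_add E2_mult E2_pow)
    moreover have "E2 ((x + u) ^ 2 + (x + u) * (y + u) + (y + u) ^ 2) (x * y + (x + y + u) * (x + y) + u ^ 2)"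
      by (rule E2_by[OF id_I1])
    moreover have "x * y + (x + y + u) * (x + y) + u ^ 2 = (x * y + y * (x + y + u) + (x + y + u) * x) + u ^ 2"
      by (rule id_e2)
    moreover have "E2 ((x * y + y * (x + y + u) + (x + y + u) * x) + u ^ 2) ((x * y + y * z + z * x) + u ^ 2)"
      using E2_sym[OF h(3)] by (intro E2_add E2_mult E2_refl)
    ultimately have key: "E2 (a ^ 2 + a * b + b ^ 2) ((x * y + y * z + z * x) + u ^ 2)"
      using E2_trans by simp
    have "E2 (a ^ 2 + a * b + b ^ 2) (tp (w + u ^ 2)) \<longleftrightarrow> E2 (a ^ 2 + a * b + b ^ 2) (w + u ^ 2)"
      using tp(2)[of "w + u ^ 2"] E2_trans E2_sym by blast
    also have "\<dots> \<longleftrightarrow> E2 ((x * y + y * z + z * x) + u ^ 2) (w + u ^ 2)"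
      using key E2_trans E2_sym by blast
    also have "\<dots> \<longleftrightarrow> E2 (x * y + y * z + z * x) w"
      unfolding E2_def by simp
    finally show "E2 (x * y + y * z + z * x) w \<longleftrightarrow> E2 (a ^ 2 + a * b + b ^ 2) (tp (w + u ^ 2))" by simp
  qed
  then show ?thesis unfolding Sol1_def .
qed

lemma K2: assumes u: "u \<in> T" and w: "w \<in> T"
  shows "card {p \<in> T \<times> T \<times> T. E2 (fst p + fst (snd p) + snd (snd p)) u \<and>
            E2 (fst p * fst (snd p) + fst (snd p) * snd (snd p) + snd (snd p) * fst p + snd (snd p) ^ 2) w}
       = card {p \<in> T \<times> T. E2 (fst p * snd p) w}"
proof (rule Kbij[OF u])
  fix x y z a b assume T5: "x \<in> T" "y \<in> T" "z \<in> T" "a \<in> T" "b \<in> T"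
    and h: "E2 a (x + u)" "E2 b (y + u)" "E2 z (x + y + u)"
  have "E2 (a * b) ((x + u) * (y + u))" using h by (intro E2_mult)
  moreover have "E2 ((x + u) * (y + u)) (x * y + y * (x + y + u) + (x + y + u) * x + (x + y + u) ^ 2)"
    by (rule E2_by[OF id_I4])
  moreover have "E2 (x * y + y * (x + y + u) + (x + y + u) * x + (x + y + u) ^ 2) (x * y + y * z + z * x + z ^ 2)"
    using E2_sym[OF h(3)] by (intro E2_add E2_mult E2_refl E2_pow)
  ultimately have key: "E2 (a * b) (x * y + y * z + z * x + z ^ 2)" using E2_trans by blast
  show "E2 (x * y + y * z + z * x + z ^ 2) w \<longleftrightarrow> E2 (a * b) w"
    using key E2_trans E2_sym by blast
qed

end

lemma count_card: assumes "finite A"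
  shows "count (image_mset g (mset_set A)) r = card {x \<in> A. g x = r}"
proof -
  have "count (image_mset g (mset_set A)) r = (\<Sum>y\<in>g -` {r} \<inter> A. count (mset_set A) y)"
    using count_image_mset[of g "mset_set A" r] assms by simp
  also have "\<dots> = (\<Sum>y\<in>g -` {r} \<inter> A. 1)" using assms by (intro sum.cong) auto
  also have "\<dots> = card (g -` {r} \<inter> A)" by simp
  also have "g -` {r} \<inter> A = {x \<in> A. g x = r}" by auto
  finally show ?thesis .
qed

lemma card_transfer: assumes "bij_betw \<Phi> A A"
  shows "card {p \<in> A. P p} = card {p \<in> A. P (\<Phi> p)}"
proof -
  have inj: "inj_on \<Phi> {p \<in> A. P (\<Phi> p)}" using assms unfolding bij_betw_def by (auto intro: inj_on_subset)
  have "\<Phi> ` {p \<in> A. P (\<Phi> p)} = {p \<in> A. P p}" using assms unfolding bij_betw_def by auto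
  then show ?thesis using card_image[OF inj] by simp
qed

context gr begin

definition sq :: "4 poly \<Rightarrow> 4 poly" where "sq x = tp (x ^ 2)"

lemma sq: assumes "x \<in> T" shows "sq x \<in> T" "E (x ^ 2) (sq x)"
  unfolding sq_def using tp(1) apply blast
  using T_mult[OF assms assms] unfolding power2_eq_square .

definition Phi :: "4 poly \<times> 4 poly \<times> 4 poly \<Rightarrow> 4 poly \<times> 4 poly \<times> 4 poly" where
  "Phi p = (sq (fst p), sq (fst (snd p)), sq (snd (snd p)))"

lemma Phi_bij: "bij_betw Phi (T \<times> T \<times> T) (T \<times> T \<times> T)"
proof -
  have injsq: "x = y" if "x \<in> T" "y \<in> T" "sq x = sq y" for x y
  proof -
    have "E (x ^ 2) (sq y)" using sq(2)[OF that(1)] that(3) by simp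
    then have "E (x ^ 2) (y ^ 2)" using E_trans[OF _ E_sym[OF sq(2)[OF that(2)]]] by blast
    then show ?thesis using T_sq_inj that by blast
  qed
  have inj: "inj_on Phi (T \<times> T \<times> T)"
  proof (rule inj_onI)
    fix p p' assume pp: "p \<in> T \<times> T \<times> T" "p' \<in> T \<times> T \<times> T" "Phi p = Phi p'"
    obtain x y z where p: "p = (x, y, z)" by (cases p) auto
    obtain x' y' z' where p': "p' = (x', y', z')" by (cases p') auto
    have "sq x = sq x'" "sq y = sq y'" "sq z = sq z'" using pp(3) unfolding p p' Phi_def by auto
    moreover have "x \<in> T" "y \<in> T" "z \<in> T" "x' \<in> T" "y' \<in> T" "z' \<in> T" using pp(1,2) p p' by auto
    ultimately have "x = x'" "y = y'" "z = z'" using injsq by blast+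
    then show "p = p'" using p p' by simp
  qed
  have sub: "Phi ` (T \<times> T \<times> T) \<subseteq> T \<times> T \<times> T" unfolding Phi_def using sq(1) by auto
  have "Phi ` (T \<times> T \<times> T) = T \<times> T \<times> T"
    by (rule endo_inj_surj[OF _ sub inj]) (simp add: T_fin)
  then show ?thesis using inj unfolding bij_betw_def by blast
qed

lemma deg_T3: assumes "x \<in> T" "y \<in> T" "z \<in> T" shows "degree (x + y + z) < m \<and> degree (x + y - z) < m"
proof -
  have d: "degree x < m" "degree y < m" "degree z < m" using T_deg assms by auto
  have "degree (x + y) < m" using degree_add_le_max[of x y] d by simp
  then have "degree (x + y + z) < m" "degree (x + y - z) < m"
    using degree_add_le_max[of "x + y" z] degree_diff_le_max[of "x + y" z] d by auto
  then show ?thesis by simp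
qed

lemma main_count:
  assumes r: "degree r < m"
  shows "count (image_mset (\<lambda>(X, Y, Z). X + Y + Z) (mset_set (T \<times> T \<times> T))) r
           = (if r \<in> uminus ` T then 1 else 2 ^ m + 1)
       \<and> count (image_mset (\<lambda>(X, Y, Z). X + Y - Z) (mset_set (T \<times> T \<times> T))) r
           = (if r \<in> T then 2 ^ (m + 1) - 1 else 2 ^ m - 1)"
proof -
  obtain U V where UV: "U \<in> T" "V \<in> T" "E r (U + 2 * V)" using decomp by blast
  obtain u where u: "u \<in> T" "E (u ^ 2) U" using T_sqrt[OF UV(1)] by blast
  have fin: "finite (T \<times> T \<times> T)" using T_fin by simp
  let ?e2 = "\<lambda>p. fst p * fst (snd p) + fst (snd p) * snd (snd p) + snd (snd p) * fst p"
  have c1: "count (image_mset (\<lambda>(X, Y, Z). X + Y + Z) (mset_set (T \<times> T \<times> T))) r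
      = card {p \<in> T \<times> T \<times> T. E2 (fst p + fst (snd p) + snd (snd p)) u \<and> E2 (?e2 p) V}"
  proof -
    have "count (image_mset (\<lambda>(X, Y, Z). X + Y + Z) (mset_set (T \<times> T \<times> T))) r
        = card {p \<in> T \<times> T \<times> T. (\<lambda>(X, Y, Z). X + Y + Z) p = r}" by (rule count_card[OF fin])
    also have "\<dots> = card {p \<in> T \<times> T \<times> T. (\<lambda>(X, Y, Z). X + Y + Z) (Phi p) = r}"
      by (rule card_transfer[OF Phi_bij])
    also have "{p \<in> T \<times> T \<times> T. (\<lambda>(X, Y, Z). X + Y + Z) (Phi p) = r}
        = {p \<in> T \<times> T \<times> T. E2 (fst p + fst (snd p) + snd (snd p)) u \<and> E2 (?e2 p) V}"
    proof (rule Collect_cong, rule conj_cong[OF refl])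
      fix p assume "p \<in> T \<times> T \<times> T"
      then obtain x y z where p: "p = (x, y, z)" "x \<in> T" "y \<in> T" "z \<in> T" by auto
      have sxyz: "sq x \<in> T" "sq y \<in> T" "sq z \<in> T" using sq(1) p by auto
      have "sq x + sq y + sq z = r \<longleftrightarrow> E (sq x + sq y + sq z) r"
        using canon_eq[OF conjunct1[OF deg_T3[OF sxyz]] r] by auto
      also have "\<dots> \<longleftrightarrow> E (x ^ 2 + y ^ 2 + z ^ 2) r"
      proof -
        have "E (x ^ 2 + y ^ 2 + z ^ 2) (sq x + sq y + sq z)" using sq(2) p by (intro E_add) auto
        then show ?thesis using E_trans E_sym by blast
      qed
      also have "x ^ 2 + y ^ 2 + z ^ 2 = (x + y + z) ^ 2 + 2 * (x * y + y * z + z * x)"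
        using id_sum3[of x y z] by (simp only: two_two add_0_right)
      also have "E ((x + y + z) ^ 2 + 2 * (x * y + y * z + z * x)) r
          \<longleftrightarrow> E ((x + y + z) ^ 2 + 2 * (x * y + y * z + z * x)) (U + 2 * V)"
        using UV(3) E_trans E_sym by blast
      also have "\<dots> \<longleftrightarrow> E2 (x + y + z) u \<and> E2 (x * y + y * z + z * x) V"
        by (rule keyD[OF u(1) UV(1,2) u(2)])
      finally show "(\<lambda>(X, Y, Z). X + Y + Z) (Phi p) = r
          \<longleftrightarrow> E2 (fst p + fst (snd p) + snd (snd p)) u \<and> E2 (?e2 p) V"
        unfolding p Phi_def by simp
    qed
    finally show ?thesis .
  qed
  have tp0: "tp (V + u ^ 2) = 0 \<longleftrightarrow> V = U"
  proof -
    have "tp (V + u ^ 2) = 0 \<longleftrightarrow> E2 (V + u ^ 2) 0"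
      using tp_unique[OF T_0] tp(2) by metis
    also have "\<dots> \<longleftrightarrow> E2 (V + U) 0"
    proof -
      have "E2 (V + u ^ 2) (V + U)" by (rule E2_add[OF E2_refl E_E2[OF u(2)]])
      then show ?thesis using E2_trans E2_sym by blast
    qed
    also have "\<dots> \<longleftrightarrow> E2 V U" unfolding E2_def
      by (rule I_shift[where W = U]) (simp add: algebra_simps)
    also have "\<dots> \<longleftrightarrow> V = U" using T_inj2[OF UV(2,1)] by auto
    finally show ?thesis .
  qed
  have negT: "r \<in> uminus ` T \<longleftrightarrow> V = U"
  proof
    assume "r \<in> uminus ` T"
    then obtain t where t: "t \<in> T" "r = - t" by blast
    have "- t = t + 2 * t + 2 * (2 * (- t))" by (simp add: algebra_simps)
    then have eq: "- t = t + 2 * t" by (simp only: two_two add_0_right)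
    have e1: "E (U + 2 * V) (- t)" using E_sym[OF UV(3)] t(2) by (simp only:)
    from e1 have "E (U + 2 * V) (t + 2 * t)" by (simp only: eq)
    then show "V = U" using decomp_unique[OF UV(1,2) t(1) t(1)] by simp
  next
    assume "V = U"
    have "U + 2 * U = - U + 2 * (2 * U)" by (simp add: algebra_simps)
    then have eq: "U + 2 * U = - U" by (simp only: two_two add_0_right)
    have "E r (U + 2 * U)" using UV(3) \<open>V = U\<close> by (simp only:)
    then have "E r (- U)" by (simp only: eq)
    moreover have "degree (- U) < m" using T_deg[OF UV(1)] by simp
    ultimately have "r = - U" using canon_eq r by blast
    then show "r \<in> uminus ` T" using UV(1) by blast
  qed
  have part1: "count (image_mset (\<lambda>(X, Y, Z). X + Y + Z) (mset_set (T \<times> T \<times> T))) r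
           = (if r \<in> uminus ` T then 1 else 2 ^ m + 1)"
  proof -
    have "count (image_mset (\<lambda>(X, Y, Z). X + Y + Z) (mset_set (T \<times> T \<times> T))) r
        = card (Sol1 (tp (V + u ^ 2)))" using c1 K1[OF u(1) UV(2)] by simp
    also have "\<dots> = (if tp (V + u ^ 2) = 0 then 1 else q + 1)" by (rule Q1[OF tp(1)])
    finally show ?thesis using tp0 negT unfolding q_def by simp
  qed
  have c2: "count (image_mset (\<lambda>(X, Y, Z). X + Y - Z) (mset_set (T \<times> T \<times> T))) r
      = card {p \<in> T \<times> T \<times> T. E2 (fst p + fst (snd p) + snd (snd p)) u \<and> E2 (?e2 p + snd (snd p) ^ 2) V}"
  proof -
    have "count (image_mset (\<lambda>(X, Y, Z). X + Y - Z) (mset_set (T \<times> T \<times> T))) r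
        = card {p \<in> T \<times> T \<times> T. (\<lambda>(X, Y, Z). X + Y - Z) p = r}" by (rule count_card[OF fin])
    also have "\<dots> = card {p \<in> T \<times> T \<times> T. (\<lambda>(X, Y, Z). X + Y - Z) (Phi p) = r}"
      by (rule card_transfer[OF Phi_bij])
    also have "{p \<in> T \<times> T \<times> T. (\<lambda>(X, Y, Z). X + Y - Z) (Phi p) = r}
        = {p \<in> T \<times> T \<times> T. E2 (fst p + fst (snd p) + snd (snd p)) u \<and> E2 (?e2 p + snd (snd p) ^ 2) V}"
    proof (rule Collect_cong, rule conj_cong[OF refl])
      fix p assume "p \<in> T \<times> T \<times> T"
      then obtain x y z where p: "p = (x, y, z)" "x \<in> T" "y \<in> T" "z \<in> T" by auto
      have sxyz: "sq x \<in> T" "sq y \<in> T" "sq z \<in> T" using sq(1) p by auto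
      have "sq x + sq y - sq z = r \<longleftrightarrow> E (sq x + sq y - sq z) r"
        using canon_eq[OF conjunct2[OF deg_T3[OF sxyz]] r] by auto
      also have "\<dots> \<longleftrightarrow> E (x ^ 2 + y ^ 2 - z ^ 2) r"
      proof -
        have "E (x ^ 2 + y ^ 2 - z ^ 2) (sq x + sq y - sq z)" using sq(2) p by (intro E_add E_diff) auto
        then show ?thesis using E_trans E_sym by blast
      qed
      also have "x ^ 2 + y ^ 2 - z ^ 2 = (x + y + z) ^ 2 + 2 * (x * y + y * z + z * x + z ^ 2)"
        using id_sum3m[of x y z] by (simp only: two_two add_0_right)
      also have "E ((x + y + z) ^ 2 + 2 * (x * y + y * z + z * x + z ^ 2)) r
          \<longleftrightarrow> E ((x + y + z) ^ 2 + 2 * (x * y + y * z + z * x + z ^ 2)) (U + 2 * V)"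
        using UV(3) E_trans E_sym by blast
      also have "\<dots> \<longleftrightarrow> E2 (x + y + z) u \<and> E2 (x * y + y * z + z * x + z ^ 2) V"
        by (rule keyD[OF u(1) UV(1,2) u(2)])
      finally show "(\<lambda>(X, Y, Z). X + Y - Z) (Phi p) = r
          \<longleftrightarrow> E2 (fst p + fst (snd p) + snd (snd p)) u \<and> E2 (?e2 p + snd (snd p) ^ 2) V"
        unfolding p Phi_def by simp
    qed
    finally show ?thesis .
  qed
  have inT: "r \<in> T \<longleftrightarrow> V = 0"
  proof
    assume "r \<in> T"
    have "E (U + 2 * V) (r + 2 * 0)" using UV(3) E_sym by simp
    then show "V = 0" using decomp_unique[OF UV(1,2) \<open>r \<in> T\<close> T_0] by simp
  next
    assume "V = 0"
    then have "E r U" using UV(3) by simp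
    then have "r = U" using canon_eq r T_deg[OF UV(1)] by blast
    then show "r \<in> T" using UV(1) by simp
  qed
  have part2: "count (image_mset (\<lambda>(X, Y, Z). X + Y - Z) (mset_set (T \<times> T \<times> T))) r
           = (if r \<in> T then 2 ^ (m + 1) - 1 else 2 ^ m - 1)"
  proof -
    have "count (image_mset (\<lambda>(X, Y, Z). X + Y - Z) (mset_set (T \<times> T \<times> T))) r
        = card {p \<in> T \<times> T. E2 (fst p * snd p) V}" using c2 K2[OF u(1) UV(2)] by simp
    also have "\<dots> = (if V = 0 then 2 * q - 1 else q - 1)" by (rule Q2[OF UV(2)])
    finally show ?thesis using inT unfolding q_def by simp
  qed
  show ?thesis using part1 part2 by blast
qed

end


theorem lemmaB3:
  fixes f \<beta> :: "4 poly" and m :: nat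
  assumes "odd m"
    and "GR_modulus f m"
    and "\<beta> \<in> GR_carrier f"
    and "GR_mult_order f \<beta> (2 ^ m - 1)"
  shows "(\<forall>r \<in> GR_carrier f.
           count (image_mset (\<lambda>(X, Y, Z). X + Y + Z)
                    (mset_set (teich f \<beta> \<times> teich f \<beta> \<times> teich f \<beta>))) r
             = (if r \<in> uminus ` teich f \<beta> then 1 else 2 ^ m + 1)) \<and>
         (\<forall>r \<in> GR_carrier f.
           count (image_mset (\<lambda>(X, Y, Z). X + Y - Z)
                    (mset_set (teich f \<beta> \<times> teich f \<beta> \<times> teich f \<beta>))) r
             = (if r \<in> teich f \<beta> then 2 ^ (m + 1) - 1 else 2 ^ m - 1))"
proof -
  have lc: "lead_coeff f = 1" and df: "degree f = m" using assms(2) unfolding GR_modulus_def by auto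
  interpret gr f \<beta> m
    by unfold_locales (use assms(1,4) lc df in auto)
  show ?thesis using main_count unfolding GR_carrier_def df by blast
qed

end
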